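(* Let $(\mathcal A,\varphi,\mathcal F,\Phi)$ be a ncps of type B$'$ with associated algebra $\mathcal B$ and functional $\varphi$ on $\mathcal B$. For $i\in I$ let $\mathcal A_i$ be a subalgebra of $\mathcal A$ containing $1_{\mathcal A}$, $\mathcal F_i$ a subalgebra of $\mathcal F$, and $\mathcal B_i=\mathcal A_i\langle\mathcal F_i\rangle=\mathcal A_i\oplus{}_{\mathcal A_i}\langle\mathcal F_i\rangle$. Let $P\in\mathcal F$ with $\Phi(P)\ne0$ and $\mathcal F_P:=\{cP^n:n\in\mathbb N,c\in\mathbb C\}$. Assume that $((\mathcal A_i)_{i\in I},(\mathcal F_i)_{i\in I\sqcup\{P\}})$ is weakly B$'$-free. Then for any $n\in\mathbb N$, $i_1,\dots,i_n\in I$ with $i_l\ne i_{l+1}$ for all $l$, and $b_j=a_j+F_j\in\mathcal B_{i_j}$ ($a_j\in\mathcal A_{i_j}$, $F_j\in{}_{\mathcal A_{i_j}}\langle\mathcal F_{i_j}\rangle$) with $\varphi(b_j)=0$ for $1\le j\le n$, $$\varphi_P(b_1b_2\cdots b_n)=\varphi_P(F_1F_2\cdots F_n).$$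
   Context: Ncps of type B$'$ $(\mathcal A,\varphi,\mathcal F,\Phi)$: $\mathcal A$ unital complex algebra, $\varphi(1_{\mathcal A})=1$, $\mathcal F$ an algebra which is an $\mathcal A$-bimodule compatible with its multiplication, $\Phi:\mathcal F\to\mathbb C$ linear. $\mathcal B=\mathcal A\oplus\mathcal F$ with product $(a_1,f_1)(a_2,f_2)=(a_1a_2,a_1f_2+f_1a_2+f_1f_2)$, unit $1_{\mathcal A}$; $\varphi(a+f):=\varphi(a)$. $\varphi_P(b):=\Phi(Pb)/\Phi(P)$. ${}_{\mathcal A_1}\langle\mathcal F_1\rangle$ denotes the span in $\mathcal F$ of all $a_0f_1a_1\cdots a_{n-1}f_na_n$ with $n\ge1$, $a_l\in\mathcal A_1$, $f_l\in\mathcal F_1$; $\mathcal A_1\langle\mathcal F_1\rangle=\mathcal A_1\oplus{}_{\mathcal A_1}\langle\mathcal F_1\rangle$ is the subalgebra of $\mathcal B$ generated by $\mathcal A_1\oplus\mathcal F_1$. Weak B$'$-freeness of $((\mathcal A_i)_{i\in I},(\mathcal F_j)_{j\in J})$: the $\mathcal A_i$ are free w.r.t. $\varphi$ ($\varphi(c_1\cdots c_n)=0$ for alternating indices and centered $c_l\in\mathcal A_{i_l}$), and with $\mathcal A_0$, $\mathcal F_0$ the algebras generated by all $\mathcal A_i$, resp. all $\mathcal F_j$, $\Phi(c_0g_1c_1\cdots c_{n-1}g_nc_n)=\varphi(c_0c_n)\prod_{l=1}^{n-1}\varphi(c_l)\Phi(g_1\cdots g_n)$ for $n\ge1$, $c_l\in\mathcal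 A_0$, $g_l\in\mathcal F_0$. *)

theory Defs
  imports Complex_Main
begin

(*   'a :: ring_1  is the carrier type of the unital algebra A,         *)
(*        with complex scalar multiplication sA                         *)
(*   'f :: ring    is the carrier type of the (possibly non-unital)     *)
(*        algebra F, with complex scalar multiplication sF              *)
(*   lm a f = a f  (left A-action),  rm f a = f a  (right A-action)     *)

definition complex_algebra :: "(complex \<Rightarrow> 'r::ring \<Rightarrow> 'r) \<Rightarrow> bool" where
  "complex_algebra s \<longleftrightarrow> vector_space s \<and>
     (\<forall>c x y. s c (x * y) = s c x * y \<and> s c (x * y) = x * s c y)"

definition ncps_B' ::
  "(complex \<Rightarrow> 'a::ring_1 \<Rightarrow> 'a) \<Rightarrow> ('a \<Rightarrow> complex) \<Rightarrow>
   (complex \<Rightarrow> 'f::ring \<Rightarrow> 'f) \<Rightarrow> ('a \<Rightarrow> 'f \<Rightarrow> 'f) \<Rightarrow> ('f \<Rightarrow> 'a \<Rightarrow> 'f) \<Rightarrow>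
   ('f \<Rightarrow> complex) \<Rightarrow> bool" where
  "ncps_B' sA \<phi> sF lm rm \<Phi> \<longleftrightarrow>
     complex_algebra sA \<and> complex_algebra sF \<and>
     Vector_Spaces.linear sA (*) \<phi> \<and> \<phi> 1 = 1 \<and>
     Vector_Spaces.linear sF (*) \<Phi> \<and>
     \<comment> \<open>A-bimodule structure on F\<close>
     (\<forall>a f g. lm a (f + g) = lm a f + lm a g) \<and>
     (\<forall>a b f. lm (a + b) f = lm a f + lm b f) \<and>
     (\<forall>c a f. lm (sA c a) f = sF c (lm a f) \<and> lm a (sF c f) = sF c (lm a f)) \<and>
     (\<forall>a f g. rm (f + g) a = rm f a + rm g a) \<and>
     (\<forall>a b f. rm f (a + b) = rm f a + rm f b) \<and>
     (\<forall>c a f. rm f (sA c a) = sF c (rm f a) \<and> rm (sF c f) a = sF c (rm f a)) \<and>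
     (\<forall>f. lm 1 f = f \<and> rm f 1 = f) \<and>
     (\<forall>a b f. lm (a * b) f = lm a (lm b f)) \<and>
     (\<forall>a b f. rm f (a * b) = rm (rm f a) b) \<and>
     (\<forall>a b f. lm a (rm f b) = rm (lm a f) b) \<and>
     \<comment> \<open>compatibility with the multiplication of F\<close>
     (\<forall>a f g. lm a (f * g) = lm a f * g) \<and>
     (\<forall>a f g. rm f a * g = f * lm a g) \<and>
     (\<forall>a f g. rm (f * g) a = f * rm g a)"

(* The algebra B = A \<oplus> F, elements are pairs (a, f) = a + f          *)

definition Bmult :: "('a::ring_1 \<Rightarrow> 'f::ring \<Rightarrow> 'f) \<Rightarrow> ('f \<Rightarrow> 'a \<Rightarrow> 'f) \<Rightarrow>
    'a \<times> 'f \<Rightarrow> 'a \<times> 'f \<Rightarrow> 'a \<times> 'f" where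
  "Bmult lm rm x y = (fst x * fst y, lm (fst x) (snd y) + rm (snd x) (fst y) + snd x * snd y)"

definition Bone :: "'a::ring_1 \<times> 'f::ring" where
  "Bone = (1, 0)"

definition Bprod :: "('a::ring_1 \<Rightarrow> 'f::ring \<Rightarrow> 'f) \<Rightarrow> ('f \<Rightarrow> 'a \<Rightarrow> 'f) \<Rightarrow>
    ('a \<times> 'f) list \<Rightarrow> 'a \<times> 'f" where
  "Bprod lm rm xs = foldr (Bmult lm rm) xs Bone"

definition phiB :: "('a \<Rightarrow> complex) \<Rightarrow> 'a \<times> 'f \<Rightarrow> complex" where
  "phiB \<phi> b = \<phi> (fst b)"

(* phi_P(b) = Phi(P b) / Phi(P);  P b = P a + P f  for b = a + f *)
definition phiP :: "('f::ring \<Rightarrow> 'a \<Rightarrow> 'f) \<Rightarrow> ('f \<Rightarrow> complex) \<Rightarrow> 'f \<Rightarrow> 'a \<times> 'f \<Rightarrow> complex" where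
  "phiP rm \<Phi> P b = \<Phi> (rm P (fst b) + P * snd b) / \<Phi> P"

definition unital_subalg :: "(complex \<Rightarrow> 'a::ring_1 \<Rightarrow> 'a) \<Rightarrow> 'a set \<Rightarrow> bool" where
  "unital_subalg sA S \<longleftrightarrow> 0 \<in> S \<and> 1 \<in> S \<and>
     (\<forall>x\<in>S. \<forall>y\<in>S. x + y \<in> S \<and> x * y \<in> S) \<and> (\<forall>c. \<forall>x\<in>S. sA c x \<in> S)"

definition subalg :: "(complex \<Rightarrow> 'f::ring \<Rightarrow> 'f) \<Rightarrow> 'f set \<Rightarrow> bool" where
  "subalg sF S \<longleftrightarrow> 0 \<in> S \<and>
     (\<forall>x\<in>S. \<forall>y\<in>S. x + y \<in> S \<and> x * y \<in> S) \<and> (\<forall>c. \<forall>x\<in>S. sF c x \<in> S)"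

definition gen_unital_subalg :: "(complex \<Rightarrow> 'a::ring_1 \<Rightarrow> 'a) \<Rightarrow> 'a set \<Rightarrow> 'a set" where
  "gen_unital_subalg sA X = \<Inter>{S. unital_subalg sA S \<and> X \<subseteq> S}"

definition gen_subalg :: "(complex \<Rightarrow> 'f::ring \<Rightarrow> 'f) \<Rightarrow> 'f set \<Rightarrow> 'f set" where
  "gen_subalg sF X = \<Inter>{S. subalg sF S \<and> X \<subseteq> S}"

(* Monomials  a_0 f_1 a_1 f_2 a_2 ... f_n a_n  in F  (n \<ge> 1)          *)
(* represented by a_0 and the list [(f_1,a_1), ..., (f_n,a_n)]         *)

fun mtail :: "('f::ring \<Rightarrow> 'a \<Rightarrow> 'f) \<Rightarrow> ('f \<times> 'a) list \<Rightarrow> 'f" where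
  "mtail rm [] = 0"
| "mtail rm [(f, a)] = rm f a"
| "mtail rm ((f, a) # rest) = rm f a * mtail rm rest"

definition monomial :: "('a \<Rightarrow> 'f::ring \<Rightarrow> 'f) \<Rightarrow> ('f \<Rightarrow> 'a \<Rightarrow> 'f) \<Rightarrow>
    'a \<Rightarrow> ('f \<times> 'a) list \<Rightarrow> 'f" where
  "monomial lm rm a0 xs = lm a0 (mtail rm xs)"

fun fprod :: "'f::ring list \<Rightarrow> 'f" where
  "fprod [] = 0"
| "fprod [f] = f"
| "fprod (f # fs) = f * fprod fs"

definition AF_span :: "(complex \<Rightarrow> 'f::ring \<Rightarrow> 'f) \<Rightarrow> ('a \<Rightarrow> 'f \<Rightarrow> 'f) \<Rightarrow> ('f \<Rightarrow> 'a \<Rightarrow> 'f) \<Rightarrow>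
    'a set \<Rightarrow> 'f set \<Rightarrow> 'f set" where
  "AF_span sF lm rm A1 F1 = module.span sF
     {monomial lm rm a0 xs | a0 xs. xs \<noteq> [] \<and> a0 \<in> A1 \<and> (\<forall>(f, a) \<in> set xs. f \<in> F1 \<and> a \<in> A1)}"

definition alternating :: "'i list \<Rightarrow> bool" where
  "alternating is \<longleftrightarrow> (\<forall>l. Suc l < length is \<longrightarrow> is ! l \<noteq> is ! Suc l)"

definition free_wrt :: "('a::ring_1 \<Rightarrow> complex) \<Rightarrow> 'i set \<Rightarrow> ('i \<Rightarrow> 'a set) \<Rightarrow> bool" where
  "free_wrt \<phi> I A \<longleftrightarrow>
     (\<forall>is cs. is \<noteq> [] \<and> set is \<subseteq> I \<and> alternating is \<and> length cs = length is \<and>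
        (\<forall>l < length is. cs ! l \<in> A (is ! l) \<and> \<phi> (cs ! l) = 0)
        \<longrightarrow> \<phi> (prod_list cs) = 0)"

definition weakly_B'_free ::
  "(complex \<Rightarrow> 'a::ring_1 \<Rightarrow> 'a) \<Rightarrow> ('a \<Rightarrow> complex) \<Rightarrow>
   (complex \<Rightarrow> 'f::ring \<Rightarrow> 'f) \<Rightarrow> ('a \<Rightarrow> 'f \<Rightarrow> 'f) \<Rightarrow> ('f \<Rightarrow> 'a \<Rightarrow> 'f) \<Rightarrow>
   ('f \<Rightarrow> complex) \<Rightarrow> 'i set \<Rightarrow> ('i \<Rightarrow> 'a set) \<Rightarrow> 'j set \<Rightarrow> ('j \<Rightarrow> 'f set) \<Rightarrow> bool" where
  "weakly_B'_free sA \<phi> sF lm rm \<Phi> I A J F \<longleftrightarrow>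
     free_wrt \<phi> I A \<and>
     (let A0 = gen_unital_subalg sA (\<Union>i\<in>I. A i);
          F0 = gen_subalg sF (\<Union>j\<in>J. F j)
      in \<forall>n c g. n \<ge> 1 \<and> (\<forall>l\<le>n. c l \<in> A0) \<and> (\<forall>l\<in>{1..n}. g l \<in> F0) \<longrightarrow>
           \<Phi> (monomial lm rm (c 0) (map (\<lambda>l. (g l, c l)) [1..<Suc n]))
             = \<phi> (c 0 * c n) * (\<Prod>l\<in>{1..<n}. \<phi> (c l)) * \<Phi> (fprod (map g [1..<Suc n])))"

(* F_P = { c P^n : n \<in> \<nat>, c \<in> \<complex> }, with \<nat> = {1,2,...} (F need not be unital) *)
fun fpow :: "'f::ring \<Rightarrow> nat \<Rightarrow> 'f" where
  "fpow P 0 = 0"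
| "fpow P (Suc 0) = P"
| "fpow P (Suc n) = P * fpow P n"

definition FP :: "(complex \<Rightarrow> 'f::ring \<Rightarrow> 'f) \<Rightarrow> 'f \<Rightarrow> 'f set" where
  "FP sF P = {sF c (fpow P n) | c n. n \<ge> 1}"

end

theory Submission
  imports Defs
begin

fun alt :: "'i list \<Rightarrow> bool" where
  "alt (x # y # r) = (x \<noteq> y \<and> alt (y # r))"
| "alt _ = True"

lemma alternating_alt: "alternating xs = alt xs"
proof (induction xs rule: alt.induct)
  case (1 x y r)
  have "alternating (x # y # r) = (x \<noteq> y \<and> alternating (y # r))"
    unfolding alternating_def
    apply (rule iffI)
     apply (rule conjI)
      apply (drule spec[of _ 0])
      apply simp
     apply (intro allI impI)
     apply (drule_tac x="Suc l" in spec)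
     apply simp
    apply (intro allI impI)
    apply (case_tac l)
     apply auto
    done
  then show ?case using 1 by simp
qed (auto simp: alternating_def)

lemma alt_Cons: "alt (x # xs) = (alt xs \<and> (xs \<noteq> [] \<longrightarrow> x \<noteq> hd xs))"
  by (cases xs) auto

lemma alt_snoc: "alt (xs @ [y]) = (alt xs \<and> (xs \<noteq> [] \<longrightarrow> last xs \<noteq> y))"
  by (induction xs rule: alt.induct) auto

lemma alt_tl: "alt (x # xs) \<Longrightarrow> alt xs"
  by (simp add: alt_Cons)

lemma mtail_Cons: "rest \<noteq> [] \<Longrightarrow> mtail rm ((f, a) # rest) = rm f a * mtail rm rest"
  by (cases rest) auto

locale L47 =
  fixes sA :: "complex \<Rightarrow> 'a::ring_1 \<Rightarrow> 'a"
    and sF :: "complex \<Rightarrow> 'f::ring \<Rightarrow> 'f"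
    and \<phi> :: "'a \<Rightarrow> complex" and \<Phi> :: "'f \<Rightarrow> complex"
    and lm :: "'a \<Rightarrow> 'f \<Rightarrow> 'f" and rm :: "'f \<Rightarrow> 'a \<Rightarrow> 'f"
    and I :: "'i set" and A :: "'i \<Rightarrow> 'a set" and F :: "'i \<Rightarrow> 'f set"
    and P :: 'f
  assumes ncps: "ncps_B' sA \<phi> sF lm rm \<Phi>"
    and subA: "\<And>i. i \<in> I \<Longrightarrow> unital_subalg sA (A i)"
    and subF: "\<And>i. i \<in> I \<Longrightarrow> subalg sF (F i)"
    and free: "weakly_B'_free sA \<phi> sF lm rm \<Phi> I A (Some ` I \<union> {None})
                 (\<lambda>j. case j of Some i \<Rightarrow> F i | None \<Rightarrow> FP sF P)"
begin

lemma vsA: "vector_space sA"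
  using ncps unfolding ncps_B'_def complex_algebra_def by (elim conjE) metis
lemma vsF: "vector_space sF"
  using ncps unfolding ncps_B'_def complex_algebra_def by (elim conjE) metis
lemma sA_mult1: "sA c (x * y) = sA c x * y"
  using ncps unfolding ncps_B'_def complex_algebra_def by (elim conjE) metis
lemma sA_mult2: "sA c (x * y) = x * sA c y"
  using ncps unfolding ncps_B'_def complex_algebra_def by (elim conjE) metis
lemma sF_mult1: "sF c (x * y) = sF c x * y"
  using ncps unfolding ncps_B'_def complex_algebra_def by (elim conjE) metis
lemma sF_mult2: "sF c (x * y) = x * sF c y"
  using ncps unfolding ncps_B'_def complex_algebra_def by (elim conjE) metis
lemma phi1: "\<phi> 1 = 1"
  using ncps unfolding ncps_B'_def complex_algebra_def by (elim conjE) metis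
lemma lm_add: "lm a (f + g) = lm a f + lm a g"
  using ncps unfolding ncps_B'_def complex_algebra_def by (elim conjE) metis
lemma lm_add2: "lm (a + b) f = lm a f + lm b f"
  using ncps unfolding ncps_B'_def complex_algebra_def by (elim conjE) metis
lemma rm_add: "rm (f + g) a = rm f a + rm g a"
  using ncps unfolding ncps_B'_def complex_algebra_def by (elim conjE) metis
lemma rm_add2: "rm f (a + b) = rm f a + rm f b"
  using ncps unfolding ncps_B'_def complex_algebra_def by (elim conjE) metis
lemma rm_scale: "rm (sF c f) a = sF c (rm f a)"
  using ncps unfolding ncps_B'_def complex_algebra_def by (elim conjE) metis
lemma lm_scale: "lm a (sF c f) = sF c (lm a f)"
  using ncps unfolding ncps_B'_def complex_algebra_def by (elim conjE) metis
lemma lm1: "lm 1 f = f"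
  using ncps unfolding ncps_B'_def complex_algebra_def by (elim conjE) metis
lemma rm1: "rm f 1 = f"
  using ncps unfolding ncps_B'_def complex_algebra_def by (elim conjE) metis
lemma lm_mult: "lm (a * b) f = lm a (lm b f)"
  using ncps unfolding ncps_B'_def complex_algebra_def by (elim conjE) metis
lemma rm_mult: "rm f (a * b) = rm (rm f a) b"
  using ncps unfolding ncps_B'_def complex_algebra_def by (elim conjE) metis
lemma lm_rm: "lm a (rm f b) = rm (lm a f) b"
  using ncps unfolding ncps_B'_def complex_algebra_def by (elim conjE) metis
lemma lm_fmult: "lm a (f * g) = lm a f * g"
  using ncps unfolding ncps_B'_def complex_algebra_def by (elim conjE) metis
lemma rm_lm: "rm f a * g = f * lm a g"
  using ncps unfolding ncps_B'_def complex_algebra_def by (elim conjE) metis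
lemma rm_fmult: "rm (f * g) a = f * rm g a"
  using ncps unfolding ncps_B'_def complex_algebra_def by (elim conjE) metis
lemma phi_lin: "Vector_Spaces.linear sA (*) \<phi>"
  using ncps unfolding ncps_B'_def complex_algebra_def by (elim conjE) metis
lemma Phi_lin: "Vector_Spaces.linear sF (*) \<Phi>"
  using ncps unfolding ncps_B'_def complex_algebra_def by (elim conjE) metis

lemma phi_add: "\<phi> (x + y) = \<phi> x + \<phi> y"
  using phi_lin by (simp add: Vector_Spaces.linear_iff)
lemma phi_scale: "\<phi> (sA c x) = c * \<phi> x"
  using phi_lin by (simp add: Vector_Spaces.linear_iff)
lemma Phi_add: "\<Phi> (x + y) = \<Phi> x + \<Phi> y"
  using Phi_lin by (simp add: Vector_Spaces.linear_iff)
lemma Phi_scale: "\<Phi> (sF c x) = c * \<Phi> x"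
  using Phi_lin by (simp add: Vector_Spaces.linear_iff)

lemma modF: "module sF" using vsF by (simp add: module_iff_vector_space)
lemma modA: "module sA" using vsA by (simp add: module_iff_vector_space)

lemma lm0: "lm 0 f = 0"
  using lm_add2[of 0 0 f] by simp
lemma rm0: "rm f 0 = 0"
  using rm_add2[of f 0 0] by simp

lemma sA_one_mult: "sA c 1 * x = sA c x"
  using sA_mult1[of c 1 x] by simp
lemma sA_one_mult2: "x * sA c 1 = sA c x"
  using sA_mult2[of c x 1] by simp

lemma sA_minus: "x - sA c y = x + sA (-c) y"
  using module.scale_minus_left[OF modA, of c y] by simp

lemma phi_diff: "\<phi> (x - y) = \<phi> x - \<phi> y"
proof -
  have e: "-y = sA (-1) y" using module.scale_minus_left[OF modA, of 1 y] module.scale_one[OF modA] by simp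
  have "\<phi> (x - y) = \<phi> (x + -y)" by simp
  also have "... = \<phi> x + \<phi> (sA (-1) y)" by (simp only: e phi_add)
  finally show ?thesis by (simp add: phi_scale)
qed

definition A0 where "A0 = gen_unital_subalg sA (\<Union>i\<in>I. A i)"
definition F0 where "F0 = gen_subalg sF (\<Union>j\<in>(Some ` I \<union> {None}). (case j of Some i \<Rightarrow> F i | None \<Rightarrow> FP sF P))"

lemma A_A0: "i \<in> I \<Longrightarrow> x \<in> A i \<Longrightarrow> x \<in> A0"
  unfolding A0_def gen_unital_subalg_def by blast
lemma F_F0: "i \<in> I \<Longrightarrow> x \<in> F i \<Longrightarrow> x \<in> F0"
  unfolding F0_def gen_subalg_def by force
lemma P_F0: "P \<in> F0"
proof -
  have "sF 1 (fpow P 1) \<in> FP sF P" unfolding FP_def by blast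
  then have "P \<in> FP sF P" using module.scale_one[OF modF] by simp
  then show ?thesis unfolding F0_def gen_subalg_def by force
qed
lemma one_A0: "1 \<in> A0"
  unfolding A0_def gen_unital_subalg_def unital_subalg_def by blast
lemma mult_A0: "x \<in> A0 \<Longrightarrow> y \<in> A0 \<Longrightarrow> x * y \<in> A0"
  unfolding A0_def gen_unital_subalg_def unital_subalg_def by blast

lemma freeL:
  assumes "ks \<noteq> []" "set ks \<subseteq> I" "alt ks"
    and "list_all2 (\<lambda>k c. c \<in> A k \<and> \<phi> c = 0) ks cs"
  shows "\<phi> (prod_list cs) = 0"
proof -
  have fw: "free_wrt \<phi> I A" using free unfolding weakly_B'_free_def by simp
  then have "\<forall>is cs. is \<noteq> [] \<and> set is \<subseteq> I \<and> alt is \<and> length cs = length is \<and>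
        (\<forall>l < length is. cs ! l \<in> A (is ! l) \<and> \<phi> (cs ! l) = 0)
        \<longrightarrow> \<phi> (prod_list cs) = 0" unfolding free_wrt_def alternating_alt by blast
  note H = this[THEN spec[of _ ks], THEN spec[of _ cs]]
  show ?thesis
    apply (rule H[THEN mp])
    using assms unfolding list_all2_conv_all_nth by auto
qed

lemma weak_formula:
  assumes "n \<ge> 1" "\<And>l. l \<le> n \<Longrightarrow> c l \<in> A0" "\<And>l. l \<in> {1..n} \<Longrightarrow> g l \<in> F0"
  shows "\<Phi> (monomial lm rm (c 0) (map (\<lambda>l. (g l, c l)) [1..<Suc n]))
             = \<phi> (c 0 * c n) * (\<Prod>l\<in>{1..<n}. \<phi> (c l)) * \<Phi> (fprod (map g [1..<Suc n]))"
proof -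
  have "\<forall>n c g. n \<ge> 1 \<and> (\<forall>l\<le>n. c l \<in> A0) \<and> (\<forall>l\<in>{1..n}. g l \<in> F0) \<longrightarrow>
           \<Phi> (monomial lm rm (c 0) (map (\<lambda>l. (g l, c l)) [1..<Suc n]))
             = \<phi> (c 0 * c n) * (\<Prod>l\<in>{1..<n}. \<phi> (c l)) * \<Phi> (fprod (map g [1..<Suc n]))"
    using free unfolding weakly_B'_free_def Let_def A0_def F0_def by (elim conjE) assumption
  note H = this[THEN spec[of _ n], THEN spec[of _ c], THEN spec[of _ g]]
  show ?thesis
    apply (rule H[THEN mp])
    using assms by auto
qed

end

context L47 begin

abbreviation Cen where "Cen \<equiv> (\<lambda>k c. c \<in> A k \<and> \<phi> c = 0)"

lemma FL0:
  assumes ks: "ks \<noteq> []" "set ks \<subseteq> I" "alt ks" "list_all2 Cen ks cs"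
    and w: "w = 1 \<or> (\<exists>j\<in>I. j \<noteq> hd ks \<and> w \<in> A j \<and> \<phi> w = 0)"
    and z: "z = 1 \<or> (\<exists>j\<in>I. j \<noteq> last ks \<and> z \<in> A j \<and> \<phi> z = 0)"
  shows "\<phi> (w * prod_list cs * z) = 0"
proof -
  from w z consider "w = 1" "z = 1"
    | j1 where "w = 1" "j1 \<in> I" "j1 \<noteq> last ks" "z \<in> A j1" "\<phi> z = 0"
    | j0 where "z = 1" "j0 \<in> I" "j0 \<noteq> hd ks" "w \<in> A j0" "\<phi> w = 0"
    | j0 j1 where "j1 \<in> I" "j1 \<noteq> last ks" "z \<in> A j1" "\<phi> z = 0"
        "j0 \<in> I" "j0 \<noteq> hd ks" "w \<in> A j0" "\<phi> w = 0"
    by blast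
  then show ?thesis
  proof cases
    case 1 then show ?thesis using freeL[OF ks] by simp
  next
    case (2 j1)
    have "\<phi> (prod_list (cs @ [z])) = 0"
      apply (rule freeL[of "ks @ [j1]"])
      using ks 2 by (auto simp: alt_snoc intro: list_all2_appendI)
    then show ?thesis using 2 by simp
  next
    case (3 j0)
    have "\<phi> (prod_list (w # cs)) = 0"
      apply (rule freeL[of "j0 # ks"])
      using ks 3 by (auto simp: alt_Cons)
    then show ?thesis using 3 by simp
  next
    case (4 j0 j1)
    have "\<phi> (prod_list (w # cs @ [z])) = 0"
      apply (rule freeL[of "j0 # ks @ [j1]"])
      using ks 4 by (auto simp: alt_Cons alt_snoc intro: list_all2_appendI)
    then show ?thesis using 4 by (simp add: mult.assoc)
  qed
qed

lemma center_decomp: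
  assumes "i \<in> I" "u \<in> A i"
  shows "u = sA (\<phi> u) 1 + (u - sA (\<phi> u) 1)" "u - sA (\<phi> u) 1 \<in> A i"
    "\<phi> (u - sA (\<phi> u) 1) = 0"
proof -
  show "u = sA (\<phi> u) 1 + (u - sA (\<phi> u) 1)" by simp
  have S: "unital_subalg sA (A i)" using subA assms by blast
  then have "sA (- \<phi> u) 1 \<in> A i" unfolding unital_subalg_def by blast
  then show "u - sA (\<phi> u) 1 \<in> A i" using S assms unfolding sA_minus unital_subalg_def by blast
  show "\<phi> (u - sA (\<phi> u) 1) = 0" by (simp add: phi_diff phi_scale phi1)
qed

lemma phi_left: "\<phi> ((sA \<alpha> 1 + w) * X) = \<alpha> * \<phi> X + \<phi> (w * X)"
  by (simp add: distrib_right sA_one_mult phi_add phi_scale)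
lemma phi_right: "\<phi> (X * (sA \<alpha> 1 + w)) = \<alpha> * \<phi> X + \<phi> (X * w)"
  by (simp add: distrib_left sA_one_mult2 phi_add phi_scale)

lemma FLv:
  assumes ks: "ks \<noteq> []" "set ks \<subseteq> I" "alt ks" "list_all2 Cen ks cs"
    and w: "w = 1 \<or> (\<exists>j\<in>I. j \<noteq> hd ks \<and> w \<in> A j \<and> \<phi> w = 0)"
    and v: "v = 1 \<or> (\<exists>j\<in>I. j \<noteq> last ks \<and> v \<in> A j)"
  shows "\<phi> (w * prod_list cs * v) = 0"
  using v
proof
  assume "v = 1" then show ?thesis using FL0[OF ks w] by blast
next
  assume "\<exists>j\<in>I. j \<noteq> last ks \<and> v \<in> A j"
  then obtain j where j: "j \<in> I" "j \<noteq> last ks" "v \<in> A j" by blast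
  note d = center_decomp[OF j(1) j(3)]
  have "\<phi> (w * prod_list cs * v) = \<phi> (w * prod_list cs * (sA (\<phi> v) 1 + (v - sA (\<phi> v) 1)))"
    by simp
  also have "... = \<phi> v * \<phi> (w * prod_list cs * 1)
      + \<phi> (w * prod_list cs * (v - sA (\<phi> v) 1))"
    unfolding phi_right by simp
  also have "... = 0"
    using FL0[OF ks w, of 1] FL0[OF ks w, of "v - sA (\<phi> v) 1"] d j by auto
  finally show ?thesis .
qed

lemma FL:
  assumes ks: "ks \<noteq> []" "set ks \<subseteq> I" "alt ks" "list_all2 Cen ks cs"
    and u: "u = 1 \<or> (\<exists>j\<in>I. j \<noteq> hd ks \<and> u \<in> A j)"
    and v: "v = 1 \<or> (\<exists>j\<in>I. j \<noteq> last ks \<and> v \<in> A j)"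
  shows "\<phi> (u * prod_list cs * v) = 0"
  using u
proof
  assume "u = 1" then show ?thesis using FLv[OF ks _ v] by blast
next
  assume "\<exists>j\<in>I. j \<noteq> hd ks \<and> u \<in> A j"
  then obtain j where j: "j \<in> I" "j \<noteq> hd ks" "u \<in> A j" by blast
  note d = center_decomp[OF j(1) j(3)]
  have "\<phi> (u * prod_list cs * v) = \<phi> ((sA (\<phi> u) 1 + (u - sA (\<phi> u) 1)) * (prod_list cs * v))"
    by (simp add: mult.assoc)
  also have "... = \<phi> u * \<phi> (1 * prod_list cs * v)
      + \<phi> ((u - sA (\<phi> u) 1) * prod_list cs * v)"
    unfolding phi_left by (simp add: mult.assoc)
  also have "... = 0"
    using FLv[OF ks _ v, of 1] FLv[OF ks _ v, of "u - sA (\<phi> u) 1"] d j by auto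
  finally show ?thesis .
qed

definition Tg where
  "Tg i u \<longleftrightarrow> u \<in> A0 \<and> (\<forall>ks cs v. ks \<noteq> [] \<and> hd ks = i \<and> set ks \<subseteq> I \<and> alt ks \<and>
     list_all2 Cen ks cs \<and> (v = 1 \<or> (\<exists>j\<in>I. j \<noteq> last ks \<and> v \<in> A j))
     \<longrightarrow> \<phi> (u * prod_list cs * v) = 0)"

lemma T_one: "Tg i 1"
  unfolding Tg_def
proof (intro conjI allI impI)
  show "1 \<in> A0" by (rule one_A0)
  fix ks cs v
  assume H: "ks \<noteq> [] \<and> hd ks = i \<and> set ks \<subseteq> I \<and> alt ks \<and> list_all2 Cen ks cs \<and>
       (v = 1 \<or> (\<exists>j\<in>I. j \<noteq> last ks \<and> v \<in> A j))"
  show "\<phi> (1 * prod_list cs * v) = 0"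
    apply (rule FL[where ks=ks and cs=cs])
    using H by simp_all
qed

lemma T_A:
  assumes j: "j \<in> I" "i \<noteq> j" "u \<in> A j"
  shows "Tg i u"
  unfolding Tg_def
proof (intro conjI allI impI)
  show "u \<in> A0" by (rule A_A0[OF j(1) j(3)])
  fix ks cs v
  assume H: "ks \<noteq> [] \<and> hd ks = i \<and> set ks \<subseteq> I \<and> alt ks \<and> list_all2 Cen ks cs \<and>
       (v = 1 \<or> (\<exists>j\<in>I. j \<noteq> last ks \<and> v \<in> A j))"
  have u: "u = 1 \<or> (\<exists>j\<in>I. j \<noteq> hd ks \<and> u \<in> A j)" using H j by metis
  show "\<phi> (u * prod_list cs * v) = 0"
    apply (rule FL[where ks=ks and cs=cs, OF _ _ _ _ u])
    using H by simp_all
qed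

lemma T_step:
  assumes "Tg i1 u" "i1 \<in> I" "a \<in> A i1" "\<phi> a = 0" "i2 \<noteq> i1"
  shows "Tg i2 (u * a)"
  unfolding Tg_def
proof (intro conjI allI impI)
  show "u * a \<in> A0" using assms by (auto simp: Tg_def intro: mult_A0 A_A0)
  fix ks cs v
  assume H: "ks \<noteq> [] \<and> hd ks = i2 \<and> set ks \<subseteq> I \<and> alt ks \<and> list_all2 Cen ks cs \<and>
       (v = 1 \<or> (\<exists>j\<in>I. j \<noteq> last ks \<and> v \<in> A j))"
  have "\<phi> (u * prod_list (a # cs) * v) = 0"
    using assms(1) unfolding Tg_def
    apply (elim conjE)
    apply (erule allE[of _ "i1 # ks"], erule allE[of _ "a # cs"], erule allE[of _ v])
    apply (erule mp)
    using H assms by (auto simp: alt_Cons)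
  then show "\<phi> (u * a * prod_list cs * v) = 0" by (simp add: mult.assoc)
qed

lemma T_zero:
  assumes "Tg i u" "i \<in> I" "a \<in> A i" "\<phi> a = 0" "v = 1 \<or> (\<exists>j\<in>I. j \<noteq> i \<and> v \<in> A j)"
  shows "\<phi> (u * a * v) = 0"
proof -
  have "\<phi> (u * prod_list [a] * v) = 0"
    using assms(1) unfolding Tg_def
    apply (elim conjE)
    apply (erule allE[of _ "[i]"], erule allE[of _ "[a]"], erule allE[of _ v])
    apply (erule mp)
    using assms by auto
  then show ?thesis by simp
qed

end

context L47 begin

lemma mtail_snoc_rm: "rm (mtail rm (ys @ [(g,c)])) a = mtail rm (ys @ [(g, c*a)])"
proof (induction ys)
  case Nil then show ?case by (simp add: rm_mult)
next
  case (Cons p ys)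
  obtain f b where p: "p = (f, b)" by (cases p)
  show ?case using Cons by (simp add: p mtail_Cons rm_fmult)
qed

lemma mtail_snoc_lm: "mtail rm (ys @ [(g,c)]) * lm d Y = mtail rm (ys @ [(g, c*d)]) * Y"
proof (induction ys)
  case Nil then show ?case by (simp add: rm_lm lm_mult)
next
  case (Cons p ys)
  obtain f b where p: "p = (f, b)" by (cases p)
  show ?case using Cons by (simp add: p mtail_Cons mult.assoc)
qed

lemma mtail_append: "xs \<noteq> [] \<Longrightarrow> zs \<noteq> [] \<Longrightarrow> mtail rm (xs @ zs) = mtail rm xs * mtail rm zs"
proof (induction xs)
  case Nil then show ?case by simp
next
  case (Cons p xs)
  obtain f b where p: "p = (f, b)" by (cases p)
  show ?case
  proof (cases "xs = []")
    case True then show ?thesis using Cons by (simp add: p mtail_Cons)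
  next
    case False then show ?thesis using Cons by (simp add: p mtail_Cons mult.assoc)
  qed
qed

lemma mono_rm: "rm (monomial lm rm c0 (ys @ [(g,c)])) a = monomial lm rm c0 (ys @ [(g, c*a)])"
  unfolding monomial_def by (simp add: lm_rm[symmetric] mtail_snoc_rm)

lemma mono_mult: "zs \<noteq> [] \<Longrightarrow>
  monomial lm rm c0 (ys @ [(g,c)]) * monomial lm rm d zs = monomial lm rm c0 (ys @ [(g, c*d)] @ zs)"
  unfolding monomial_def
  by (simp add: lm_fmult[symmetric] mtail_snoc_lm mtail_append[symmetric])

definition okL :: "('f \<times> 'a) list \<Rightarrow> bool" where
  "okL xs \<longleftrightarrow> (\<forall>p\<in>set xs. fst p \<in> F0 \<and> snd p \<in> A0)"

lemma Phi_mono_zero: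
  assumes "xs \<noteq> []" "okL xs" "l < length xs" "\<phi> (snd (xs ! l)) = 0"
  shows "\<Phi> (monomial lm rm 1 xs) = 0"
proof -
  define n where "n = length xs"
  define c where "c = (\<lambda>l. if l = 0 then 1 else snd (xs ! (l - 1)))"
  define g where "g = (\<lambda>l. fst (xs ! (l - 1)))"
  have map: "map (\<lambda>l. (g l, c l)) [1..<Suc n] = xs"
  proof -
    have "[1..<Suc n] = map Suc [0..<n]" by (simp add: map_Suc_upt)
    then have "map (\<lambda>l. (g l, c l)) [1..<Suc n] = map (\<lambda>i. xs ! i) [0..<n]"
      by (simp add: g_def c_def)
    also have "... = xs" by (simp add: n_def map_nth)
    finally show ?thesis .
  qed
  have n1: "n \<ge> 1" using assms(1) by (simp add: n_def Suc_le_eq)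
  have cA: "c l \<in> A0" if "l \<le> n" for l
  proof (cases "l = 0")
    case True then show ?thesis by (simp add: c_def one_A0)
  next
    case False
    then have "xs ! (l - 1) \<in> set xs" using that by (simp add: n_def)
    then show ?thesis using assms(2) False by (simp add: c_def okL_def)
  qed
  have gF: "g l \<in> F0" if "l \<in> {1..n}" for l
  proof -
    have "xs ! (l - 1) \<in> set xs" using that by (auto simp: n_def)
    then show ?thesis using assms(2) by (simp add: g_def okL_def)
  qed
  have W: "\<Phi> (monomial lm rm (c 0) (map (\<lambda>l. (g l, c l)) [1..<Suc n]))
             = \<phi> (c 0 * c n) * (\<Prod>l\<in>{1..<n}. \<phi> (c l)) * \<Phi> (fprod (map g [1..<Suc n]))"
    by (rule weak_formula[OF n1 cA gF])
  have cl: "c (Suc l) = snd (xs ! l)" by (simp add: c_def)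
  have z: "\<phi> (c 0 * c n) * (\<Prod>l\<in>{1..<n}. \<phi> (c l)) = 0"
  proof (cases "Suc l = n")
    case True
    then show ?thesis using assms(4) cl by (simp add: c_def)
  next
    case False
    then have "Suc l \<in> {1..<n}" using assms(3) by (simp add: n_def)
    then have "(\<Prod>l\<in>{1..<n}. \<phi> (c l)) = 0" using assms(4) cl
      by (metis finite_atLeastLessThan prod_zero_iff)
    then show ?thesis by simp
  qed
  have c0: "c 0 = 1" by (simp add: c_def)
  have "\<Phi> (monomial lm rm 1 xs) = \<Phi> (monomial lm rm (c 0) (map (\<lambda>l. (g l, c l)) [1..<Suc n]))"
    by (simp only: map c0)
  also have "... = \<phi> (c 0 * c n) * (\<Prod>l\<in>{1..<n}. \<phi> (c l)) * \<Phi> (fprod (map g [1..<Suc n]))"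
    by (rule W)
  also have "... = 0" by (simp only: z mult_zero_left)
  finally show ?thesis .
qed

lemma f0_of_add:
  fixes f :: "'c::ab_group_add \<Rightarrow> 'b::ab_group_add"
  assumes add: "\<And>x y. f (x + y) = f x + f y" shows "f 0 = 0"
  using add[of 0 0] by simp

lemma SP1:
  assumes x: "x \<in> module.span sF S" and S: "\<And>s. s \<in> S \<Longrightarrow> f s \<in> module.span sF T"
    and add: "\<And>x y. f (x + y) = f x + f y" and sc: "\<And>c x. f (sF c x) = sF c (f x)"
  shows "f x \<in> module.span sF T"
proof (rule module.span_induct_alt[OF modF x, where h="\<lambda>x. f x \<in> module.span sF T"])
  show "f 0 \<in> module.span sF T" using f0_of_add[of f, OF add] module.span_zero[OF modF] by simp
next
  fix c x y assume "x \<in> S" "f y \<in> module.span sF T"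
  then show "f (sF c x + y) \<in> module.span sF T"
    using S unfolding add sc by (intro module.span_add[OF modF] module.span_scale[OF modF]) auto
qed

lemma SP2:
  assumes x: "x \<in> module.span sF S" and S: "\<And>s. s \<in> S \<Longrightarrow> h s = 0"
    and add: "\<And>x y. h (x + y) = h x + h y" and sc: "\<And>c x. h (sF c x) = c * h x"
  shows "h x = 0"
proof (rule module.span_induct_alt[OF modF x, where h="\<lambda>x. h x = 0"])
  show "h 0 = 0" using f0_of_add[of h, OF add] by simp
next
  fix c x y assume "x \<in> S" "h y = 0"
  then show "h (sF c x + y) = 0" using S unfolding add sc by simp
qed

lemma SP3:
  assumes "x \<in> module.span sF S" "y \<in> module.span sF T"
    and "\<And>s t. s \<in> S \<Longrightarrow> t \<in> T \<Longrightarrow> s * t \<in> module.span sF U"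
  shows "x * y \<in> module.span sF U"
proof -
  have "s * y \<in> module.span sF U" if "s \<in> S" for s
    by (rule SP1[OF assms(2), of "\<lambda>y. s * y"]) (auto simp: assms(3) that distrib_left sF_mult2)
  then show ?thesis
    by (intro SP1[OF assms(1), of "\<lambda>x. x * y"]) (auto simp: distrib_right sF_mult1)
qed

end

context L47 begin

definition Good where
  "Good i = {monomial lm rm 1 xs | xs. xs \<noteq> [] \<and> okL xs \<and> Tg i (snd (last xs))}"
definition Head where
  "Head i = {monomial lm rm d xs | d xs. xs \<noteq> [] \<and> okL xs \<and> d \<in> A i}"
definition AFgen where
  "AFgen i = {monomial lm rm a0 xs | a0 xs. xs \<noteq> [] \<and> a0 \<in> A i \<and> (\<forall>(f, a) \<in> set xs. f \<in> F i \<and> a \<in> A i)}"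

lemma AF_eq: "AF_span sF lm rm (A i) (F i) = module.span sF (AFgen i)"
  unfolding AF_span_def AFgen_def by simp

lemma okL_append: "okL (xs @ zs) = (okL xs \<and> okL zs)"
  unfolding okL_def by auto
lemma okL_Cons: "okL (p # xs) = (fst p \<in> F0 \<and> snd p \<in> A0 \<and> okL xs)"
  unfolding okL_def by auto
lemma okL_single: "okL [(g, c)] = (g \<in> F0 \<and> c \<in> A0)"
  unfolding okL_def by auto
lemma okL_AF: "i \<in> I \<Longrightarrow> \<forall>(f, a) \<in> set xs. f \<in> F i \<and> a \<in> A i \<Longrightarrow> okL xs"
  unfolding okL_def using A_A0 F_F0 by fastforce

lemma snoc_obtain:
  assumes "xs \<noteq> []" obtains ys g c where "xs = ys @ [(g, c)]"
  using assms by (metis rev_exhaust surj_pair)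

lemma span_base: "x \<in> S \<Longrightarrow> x \<in> module.span sF S"
  by (rule module.span_base[OF modF])

lemma AFgen_Head: "i \<in> I \<Longrightarrow> AFgen i \<subseteq> Head i"
  unfolding AFgen_def Head_def using okL_AF by blast

lemma Head_mult:
  assumes "s \<in> Head j" "t \<in> Head j'" "j' \<in> I"
  shows "s * t \<in> Head j"
proof -
  obtain xs d where s: "s = monomial lm rm d xs" "xs \<noteq> []" "okL xs" "d \<in> A j"
    using assms(1) unfolding Head_def by blast
  obtain zs d' where t: "t = monomial lm rm d' zs" "zs \<noteq> []" "okL zs" "d' \<in> A j'"
    using assms(2) unfolding Head_def by blast
  obtain ys g c where xs: "xs = ys @ [(g, c)]" using snoc_obtain[OF s(2)] by blast
  have "s * t = monomial lm rm d (ys @ [(g, c * d')] @ zs)"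
    using s t xs mono_mult by simp
  moreover have "okL (ys @ [(g, c * d')] @ zs)"
    using s(3) t(3) xs A_A0[OF assms(3) t(4)] by (auto simp: okL_append okL_single okL_Cons intro: mult_A0)
  ultimately show ?thesis using s(4) unfolding Head_def by blast
qed

lemma rm_Good:
  assumes i1: "i1 \<in> I" and a: "a \<in> A i1" "\<phi> a = 0" and i2: "i2 \<noteq> i1"
    and L: "L \<in> module.span sF (Good i1)"
  shows "rm L a \<in> module.span sF (Good i2)"
proof (rule SP1[OF L, where f="\<lambda>L. rm L a"])
  fix s assume "s \<in> Good i1"
  then obtain xs where s: "s = monomial lm rm 1 xs" "xs \<noteq> []" "okL xs" "Tg i1 (snd (last xs))"
    unfolding Good_def by blast
  obtain ys g c where xs: "xs = ys @ [(g, c)]" using snoc_obtain[OF s(2)] by blast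
  have "rm s a = monomial lm rm 1 (ys @ [(g, c * a)])" using s xs mono_rm by simp
  moreover have "okL (ys @ [(g, c * a)])"
    using s(3) xs A_A0[OF i1 a(1)] by (auto simp: okL_append okL_single okL_Cons intro: mult_A0)
  moreover have "Tg i2 (c * a)" using T_step[of i1 c a i2] s(4) xs i1 a i2 by simp
  ultimately have "rm s a \<in> Good i2" unfolding Good_def by force
  then show "rm s a \<in> module.span sF (Good i2)" by (rule span_base)
qed (simp_all add: rm_add rm_scale)

lemma mult_Good:
  assumes i: "i1 \<in> I" "i2 \<noteq> i1"
    and L: "L \<in> module.span sF (Good i1)" and X: "X \<in> AF_span sF lm rm (A i1) (F i1)"
  shows "L * X \<in> module.span sF (Good i2)"
proof (rule SP3[OF L X[unfolded AF_eq]])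
  fix s t assume "s \<in> Good i1" "t \<in> AFgen i1"
  then obtain xs zs d where s: "s = monomial lm rm 1 xs" "xs \<noteq> []" "okL xs"
    and t: "t = monomial lm rm d zs" "zs \<noteq> []" "d \<in> A i1" "\<forall>(f, a) \<in> set zs. f \<in> F i1 \<and> a \<in> A i1"
    unfolding Good_def AFgen_def by blast
  obtain ys g c where xs: "xs = ys @ [(g, c)]" using snoc_obtain[OF s(2)] by blast
  have "s * t = monomial lm rm 1 (ys @ [(g, c * d)] @ zs)"
    using s t xs mono_mult by simp
  moreover have "okL (ys @ [(g, c * d)] @ zs)"
    using s(3) xs A_A0[OF i(1) t(3)] okL_AF[OF i(1) t(4)]
    by (auto simp: okL_append okL_single okL_Cons intro: mult_A0)
  moreover have "Tg i2 (snd (last (ys @ [(g, c * d)] @ zs)))"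
  proof -
    have "last zs \<in> set zs" using t(2) by simp
    then have "snd (last zs) \<in> A i1" using t(4) by auto
    then show ?thesis using T_A[OF i(1) i(2)] t(2) by simp
  qed
  moreover have "ys @ [(g, c * d)] @ zs \<noteq> []" by simp
  ultimately have "s * t \<in> Good i2" unfolding Good_def by blast
  then show "s * t \<in> module.span sF (Good i2)" by (rule span_base)
qed

lemma zeroA:
  assumes i1: "i1 \<in> I" and a: "a \<in> A i1" "\<phi> a = 0"
    and L: "L \<in> module.span sF (Good i1)"
  shows "\<Phi> (rm L a) = 0"
proof (rule SP2[OF L, where h="\<lambda>L. \<Phi> (rm L a)"])
  fix s assume "s \<in> Good i1"
  then obtain xs where s: "s = monomial lm rm 1 xs" "xs \<noteq> []" "okL xs" "Tg i1 (snd (last xs))"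
    unfolding Good_def by blast
  obtain ys g c where xs: "xs = ys @ [(g, c)]" using snoc_obtain[OF s(2)] by blast
  have e: "rm s a = monomial lm rm 1 (ys @ [(g, c * a)])" using s xs mono_rm by simp
  have ok: "okL (ys @ [(g, c * a)])"
    using s(3) xs A_A0[OF i1 a(1)] by (auto simp: okL_append okL_single okL_Cons intro: mult_A0)
  have "\<phi> (c * a * 1) = 0" using T_zero[of i1 c a 1] s(4) xs i1 a by simp
  then have "\<phi> (snd ((ys @ [(g, c * a)]) ! length ys)) = 0" by simp
  from Phi_mono_zero[OF _ ok _ this] show "\<Phi> (rm s a) = 0" unfolding e by simp
qed (simp_all add: rm_add rm_scale Phi_add Phi_scale)

lemma zeroB:
  assumes i1: "i1 \<in> I" and i2: "i2 \<in> I" "i2 \<noteq> i1" and a: "a \<in> A i1" "\<phi> a = 0"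
    and L: "L \<in> module.span sF (Good i1)" and R: "R \<in> module.span sF (Head i2)"
  shows "\<Phi> (rm L a * R) = 0"
proof (rule SP2[OF L, where h="\<lambda>L. \<Phi> (rm L a * R)"])
  fix s assume "s \<in> Good i1"
  then obtain xs where s: "s = monomial lm rm 1 xs" "xs \<noteq> []" "okL xs" "Tg i1 (snd (last xs))"
    unfolding Good_def by blast
  obtain ys g c where xs: "xs = ys @ [(g, c)]" using snoc_obtain[OF s(2)] by blast
  have e: "rm s a = monomial lm rm 1 (ys @ [(g, c * a)])" using s xs mono_rm by simp
  show "\<Phi> (rm s a * R) = 0"
  proof (rule SP2[OF R, where h="\<lambda>R. \<Phi> (rm s a * R)"])
    fix t assume "t \<in> Head i2"
    then obtain zs d where t: "t = monomial lm rm d zs" "zs \<noteq> []" "okL zs" "d \<in> A i2"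
      unfolding Head_def by blast
    have e2: "rm s a * t = monomial lm rm 1 (ys @ [(g, c * a * d)] @ zs)"
      unfolding e t(1) using mono_mult[OF t(2)] by simp
    have ok: "okL (ys @ [(g, c * a * d)] @ zs)"
      using s(3) xs t(3) A_A0[OF i1 a(1)] A_A0[OF i2(1) t(4)]
      by (auto simp: okL_append okL_single okL_Cons intro: mult_A0)
    have "\<phi> (c * a * d) = 0" using T_zero[of i1 c a d] s(4) xs i1 i2 a t(4) by auto
    then have "\<phi> (snd ((ys @ [(g, c * a * d)] @ zs) ! length ys)) = 0" by simp
    from Phi_mono_zero[OF _ ok _ this] show "\<Phi> (rm s a * t) = 0" unfolding e2 by simp
  qed (simp_all add: distrib_left Phi_add sF_mult2[symmetric] Phi_scale)
qed (simp_all add: rm_add rm_scale distrib_right Phi_add sF_mult1[symmetric] Phi_scale)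

lemma Bprod_Cons: "Bprod lm rm (x # xs) = Bmult lm rm x (Bprod lm rm xs)"
  unfolding Bprod_def by simp

lemma Bz_lemma:
  "length Fs = length js \<Longrightarrow> js \<noteq> [] \<Longrightarrow> set js \<subseteq> I \<Longrightarrow>
   (\<forall>l<length js. Fs ! l \<in> AF_span sF lm rm (A (js ! l)) (F (js ! l))) \<Longrightarrow>
   fst (Bprod lm rm (map (\<lambda>f. (0, f)) Fs)) = 0 \<and>
   snd (Bprod lm rm (map (\<lambda>f. (0, f)) Fs)) \<in> module.span sF (Head (hd js))"
proof (induction js arbitrary: Fs)
  case Nil then show ?case by simp
next
  case (Cons j js)
  obtain F1 Fs' where Fs: "Fs = F1 # Fs'" using Cons.prems(1) by (cases Fs) auto
  have jI: "j \<in> I" using Cons.prems(3) by simp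
  have F1: "F1 \<in> module.span sF (Head j)"
    using Cons.prems(4) Fs AF_eq module.span_mono[OF modF AFgen_Head[OF jI]] by force
  show ?case
  proof (cases "js = []")
    case True
    then have "Fs' = []" using Cons.prems(1) Fs by simp
    then show ?thesis using Fs F1
      by (simp add: Bprod_Cons Bprod_def Bone_def Bmult_def lm0 rm1)
  next
    case False
    have IH: "fst (Bprod lm rm (map (\<lambda>f. (0, f)) Fs')) = 0 \<and>
       snd (Bprod lm rm (map (\<lambda>f. (0, f)) Fs')) \<in> module.span sF (Head (hd js))"
      apply (rule Cons.IH[OF _ False])
      using Cons.prems Fs by auto
    have hdI: "hd js \<in> I" using Cons.prems(3) False by (cases js) auto
    obtain \<beta> where b: "Bprod lm rm (map (\<lambda>f. (0, f)) Fs') = (0, \<beta>)"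
      "\<beta> \<in> module.span sF (Head (hd js))"
      using IH by (metis prod.collapse)
    have "F1 * \<beta> \<in> module.span sF (Head j)"
      by (rule SP3[OF F1 b(2)]) (intro span_base Head_mult[OF _ _ hdI]; assumption)
    then show ?thesis using Fs b by (simp add: Bprod_Cons Bmult_def lm0 rm0)
  qed
qed

end

context L47 begin

lemma MC:
  "length as = length js \<Longrightarrow> length Fs = length js \<Longrightarrow> set js \<subseteq> I \<Longrightarrow> alt js \<Longrightarrow>
   (\<forall>l<length js. as ! l \<in> A (js ! l) \<and> \<phi> (as ! l) = 0 \<and>
       Fs ! l \<in> AF_span sF lm rm (A (js ! l)) (F (js ! l))) \<Longrightarrow>
   (js \<noteq> [] \<longrightarrow> L \<in> module.span sF (Good (hd js))) \<Longrightarrow>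
   \<Phi> (rm L (fst (Bprod lm rm (map2 Pair as Fs))) + L * snd (Bprod lm rm (map2 Pair as Fs)))
   = \<Phi> (rm L (fst (Bprod lm rm (map (\<lambda>f. (0, f)) Fs))) + L * snd (Bprod lm rm (map (\<lambda>f. (0, f)) Fs)))"
proof (induction js arbitrary: as Fs L)
  case Nil then show ?case by simp
next
  case (Cons j js)
  obtain a as' where as: "as = a # as'" using Cons.prems(1) by (cases as) auto
  obtain F1 Fs' where Fs: "Fs = F1 # Fs'" using Cons.prems(2) by (cases Fs) auto
  have jI: "j \<in> I" using Cons.prems(3) by simp
  have a: "a \<in> A j" "\<phi> a = 0" and F1: "F1 \<in> AF_span sF lm rm (A j) (F j)"
    using Cons.prems(5) as Fs by force+
  have L: "L \<in> module.span sF (Good j)" using Cons.prems(6) by simp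
  have len': "length as' = length js" "length Fs' = length js" using Cons.prems as Fs by auto
  have set': "set js \<subseteq> I" and alt': "alt js" using Cons.prems(3,4) alt_tl by auto
  have all': "\<forall>l<length js. as' ! l \<in> A (js ! l) \<and> \<phi> (as' ! l) = 0 \<and>
       Fs' ! l \<in> AF_span sF lm rm (A (js ! l)) (F (js ! l))"
    using Cons.prems(5) as Fs by force
  have hdne: "js \<noteq> [] \<Longrightarrow> hd js \<noteq> j" using Cons.prems(4) by (auto simp add: alt_Cons)
  define L1 where "L1 = rm L a"
  define L2 where "L2 = L * F1"
  have L1: "js \<noteq> [] \<longrightarrow> L1 \<in> module.span sF (Good (hd js))"
    using rm_Good[OF jI a _ L] hdne unfolding L1_def by blast
  have L2: "js \<noteq> [] \<longrightarrow> L2 \<in> module.span sF (Good (hd js))"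
    using mult_Good[OF jI _ L F1] hdne unfolding L2_def by blast
  obtain \<alpha> \<beta> where B: "Bprod lm rm (map2 Pair as' Fs') = (\<alpha>, \<beta>)" by (metis prod.collapse)
  obtain \<alpha>z \<beta>z where Bz: "Bprod lm rm (map (\<lambda>f. (0, f)) Fs') = (\<alpha>z, \<beta>z)" by (metis prod.collapse)
  have IH1: "\<Phi> (rm L1 \<alpha> + L1 * \<beta>) = \<Phi> (rm L1 \<alpha>z + L1 * \<beta>z)"
    using Cons.IH[OF len' set' alt' all' L1] B Bz by simp
  have IH2: "\<Phi> (rm L2 \<alpha> + L2 * \<beta>) = \<Phi> (rm L2 \<alpha>z + L2 * \<beta>z)"
    using Cons.IH[OF len' set' alt' all' L2] B Bz by simp
  have zero: "\<Phi> (rm L1 \<alpha>z + L1 * \<beta>z) = 0"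
  proof (cases "js = []")
    case True
    then have "Fs' = []" using len' by simp
    then have "\<alpha>z = 1" "\<beta>z = 0" using Bz by (simp_all add: Bprod_def Bone_def)
    then show ?thesis using zeroA[OF jI a L] by (simp add: L1_def rm1)
  next
    case False
    have hdI: "hd js \<in> I" using set' False by (cases js) auto
    have "fst (Bprod lm rm (map (\<lambda>f. (0, f)) Fs')) = 0 \<and>
       snd (Bprod lm rm (map (\<lambda>f. (0, f)) Fs')) \<in> module.span sF (Head (hd js))"
      by (rule Bz_lemma[OF len'(2) False set']) (use all' in blast)
    then have "\<alpha>z = 0" "\<beta>z \<in> module.span sF (Head (hd js))" using Bz by simp_all
    then show ?thesis using zeroB[OF jI hdI hdne[OF False] a L] by (simp add: L1_def rm0)
  qed
  have lhs: "rm L (a * \<alpha>) + L * (lm a \<beta> + rm F1 \<alpha> + F1 * \<beta>)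
      = (rm L1 \<alpha> + L1 * \<beta>) + (rm L2 \<alpha> + L2 * \<beta>)"
    unfolding L1_def L2_def by (simp add: rm_mult rm_lm rm_fmult distrib_left mult.assoc add_ac)
  have rhs: "rm L (0 * \<alpha>z) + L * (lm 0 \<beta>z + rm F1 \<alpha>z + F1 * \<beta>z) = rm L2 \<alpha>z + L2 * \<beta>z"
    unfolding L2_def by (simp add: rm0 lm0 rm_fmult distrib_left mult.assoc)
  show ?case
    using as Fs B Bz lhs rhs IH1 IH2 zero
    by (simp add: Bprod_Cons Bmult_def Phi_add)
qed

end

theorem lemma4p7:
  fixes sA :: "complex \<Rightarrow> 'a::ring_1 \<Rightarrow> 'a"
    and sF :: "complex \<Rightarrow> 'f::ring \<Rightarrow> 'f"
    and \<phi> :: "'a \<Rightarrow> complex" and \<Phi> :: "'f \<Rightarrow> complex"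
    and lm :: "'a \<Rightarrow> 'f \<Rightarrow> 'f" and rm :: "'f \<Rightarrow> 'a \<Rightarrow> 'f"
    and I :: "'i set" and A :: "'i \<Rightarrow> 'a set" and F :: "'i \<Rightarrow> 'f set"
    and P :: 'f
  assumes ncps: "ncps_B' sA \<phi> sF lm rm \<Phi>"
    and subA: "\<And>i. i \<in> I \<Longrightarrow> unital_subalg sA (A i)"
    and subF: "\<And>i. i \<in> I \<Longrightarrow> subalg sF (F i)"
    and PhiP: "\<Phi> P \<noteq> 0"
    and free: "weakly_B'_free sA \<phi> sF lm rm \<Phi> I A (Some ` I \<union> {None})
                 (\<lambda>j. case j of Some i \<Rightarrow> F i | None \<Rightarrow> FP sF P)"
    and idx: "set is \<subseteq> I" "alternating is"
    and len: "length as = length is" "length Fs = length is"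
    and mem_a: "\<And>j. j < length is \<Longrightarrow> as ! j \<in> A (is ! j)"
    and mem_F: "\<And>j. j < length is \<Longrightarrow> Fs ! j \<in> AF_span sF lm rm (A (is ! j)) (F (is ! j))"
    and centered: "\<And>j. j < length is \<Longrightarrow> phiB \<phi> (as ! j, Fs ! j) = 0"
  shows "phiP rm \<Phi> P (Bprod lm rm (map2 Pair as Fs))
           = phiP rm \<Phi> P (Bprod lm rm (map (\<lambda>f. (0, f)) Fs))"
proof -
  interpret L47 sA sF \<phi> \<Phi> lm rm I A F P
    using ncps subA subF free by unfold_locales auto
  show ?thesis
  proof (cases "is = []")
    case True
    then have "as = []" "Fs = []" using len by auto
    then show ?thesis by simp
  next
    case False
    have Pmono: "monomial lm rm 1 [(P, 1)] = P" by (simp add: monomial_def lm1 rm1)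
    have "P \<in> Good (hd is)"
      unfolding Good_def using Pmono okL_single P_F0 one_A0 T_one by force
    then have Pspan: "is \<noteq> [] \<longrightarrow> P \<in> module.span sF (Good (hd is))"
      using span_base by blast
    have all: "\<forall>l<length is. as ! l \<in> A (is ! l) \<and> \<phi> (as ! l) = 0 \<and>
       Fs ! l \<in> AF_span sF lm rm (A (is ! l)) (F (is ! l))"
      using mem_a mem_F centered unfolding phiB_def by simp
    have "\<Phi> (rm P (fst (Bprod lm rm (map2 Pair as Fs))) + P * snd (Bprod lm rm (map2 Pair as Fs)))
      = \<Phi> (rm P (fst (Bprod lm rm (map (\<lambda>f. (0, f)) Fs))) + P * snd (Bprod lm rm (map (\<lambda>f. (0, f)) Fs)))"
      using MC[OF len idx(1) idx(2)[unfolded alternating_alt] all Pspan] .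
    then show ?thesis unfolding phiP_def by simp
  qed
qed

end
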